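(* Let $n\in\mathbb{N}$ and $m\geq 3$. Then \[ \sigma'_m(n) =\frac{1}{(n-1)!} \sum_{k=1}^{n} (-1)^{k-1} (k-1)!\cdot B_{n,k} \big(1!\cdot p'_{m}(1),\ 2!\cdot p'_m(2),\ \dots,\ (n-k+1)!\cdot p'_m(n-k+1)\big). \]
   Context: The partial exponential Bell polynomials are $B_{n,k}(x_1,\dots,x_{n-k+1})=\sum \frac{n!}{j_1!\cdots j_{n-k+1}!}\prod_{i=1}^{n-k+1}\big(\frac{x_i}{i!}\big)^{j_i}$, the sum over all tuples of nonnegative integers $(j_1,\dots,j_{n-k+1})$ with $\sum_i j_i=k$ and $\sum_i i\,j_i=n$. For $m\ge3$ and $n\in\mathbb{N}$, $\sigma'_m(n)$ is the sum of the positive divisors $d$ of $n$ with $d\equiv 0$, $1$ or $m-1 \pmod m$. $p'_m(n)$ is the number of partitions of $n$ in which every part is congruent to $0$, $1$ or $m-1$ modulo $m$. *)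

theory Defs
  imports Complex_Main "HOL-Library.Multiset"
begin

(* The sum ranges over tuples (j_1,...,j_{n-k+1}) of naturals, represented as
   functions j :: nat => nat which vanish outside {1..n-k+1}. *)
definition bell_tuples :: "nat \<Rightarrow> nat \<Rightarrow> (nat \<Rightarrow> nat) set" where
  "bell_tuples n k = {j. (\<forall>i. i \<notin> {1..n-k+1} \<longrightarrow> j i = 0) \<and>
                         (\<Sum>i=1..n-k+1. j i) = k \<and> (\<Sum>i=1..n-k+1. i * j i) = n}"

definition partial_bell :: "nat \<Rightarrow> nat \<Rightarrow> (nat \<Rightarrow> real) \<Rightarrow> real" where
  "partial_bell n k x =
     (\<Sum>j\<in>bell_tuples n k.
        fact n / (\<Prod>i=1..n-k+1. fact (j i)) * (\<Prod>i=1..n-k+1. (x i / fact i) ^ j i))"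

definition sigma' :: "nat \<Rightarrow> nat \<Rightarrow> nat" where
  "sigma' m n = (\<Sum>d\<in>{d. d dvd n \<and> 0 < d \<and> (d mod m = 0 \<or> d mod m = 1 \<or> d mod m = m - 1)}. d)"

definition nat_partitions :: "nat \<Rightarrow> nat multiset set" where
  "nat_partitions n = {P. (\<forall>x\<in>#P. 0 < x) \<and> sum_mset P = n}"

definition p' :: "nat \<Rightarrow> nat \<Rightarrow> nat" where
  "p' m n = card {P \<in> nat_partitions n.
                   \<forall>x\<in>#P. x mod m = 0 \<or> x mod m = 1 \<or> x mod m = m - 1}"

end

theory Submission
  imports Defs "HOL-Computational_Algebra.Formal_Power_Series"
begin

unbundle fps_syntax


definition parts :: "(nat \<Rightarrow> bool) \<Rightarrow> nat \<Rightarrow> nat multiset set" where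
  "parts Q n = {P. (\<forall>x\<in>#P. 0 < x \<and> Q x) \<and> sum_mset P = n}"

definition sig :: "(nat \<Rightarrow> bool) \<Rightarrow> nat \<Rightarrow> nat" where
  "sig Q k = (\<Sum>d\<in>{d. d dvd k \<and> 0 < d \<and> Q d}. d)"

lemma sum_mset_count: "sum_mset (M::nat multiset) = (\<Sum>x\<in>set_mset M. x * count M x)"
proof (induction M)
  case empty
  then show ?case by simp
next
  case (add x M)
  show ?case
  proof (cases "x \<in># M")
    case True
    have "(\<Sum>y\<in>set_mset M. y * count (add_mset x M) y) = (\<Sum>y\<in>set_mset M. y * count M y + (if y = x then x else 0))"
      by (intro sum.cong) auto
    also have "\<dots> = sum_mset M + x" using True add by (simp add: sum.distrib)
    finally show ?thesis using True by (simp add: insert_absorb)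
  next
    case False
    have "(\<Sum>y\<in>set_mset M. y * count (add_mset x M) y) = (\<Sum>y\<in>set_mset M. y * count M y)"
      by (intro sum.cong) (auto simp: False)
    then show ?thesis using False add by (simp add: not_in_iff)
  qed
qed

lemma parts_elem_le: "P \<in> parts Q n \<Longrightarrow> x \<in># P \<Longrightarrow> x \<le> n"
proof -
  assume P: "P \<in> parts Q n" and x: "x \<in># P"
  from multi_member_split[OF x] obtain R where "P = add_mset x R" by blast
  then have "sum_mset P = x + sum_mset R" by simp
  then show "x \<le> n" using P by (simp add: parts_def)
qed

lemma size_le_sum_mset: "\<forall>x\<in>#P. 0 < x \<Longrightarrow> size P \<le> sum_mset (P::nat multiset)"
proof (induction P)
  case empty then show ?case by simp
next
  case (add x P) then show ?case by auto
qed

lemma finite_parts: "finite (parts Q n)"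
proof -
  have "parts Q n \<subseteq> (\<Union>s\<in>{..n}. multisets_of_size {1..n} s)"
  proof
    fix P assume P: "P \<in> parts Q n"
    have "set_mset P \<subseteq> {1..n}" using parts_elem_le[OF P] P
      by (auto simp: parts_def Suc_le_eq)
    moreover have "size P \<le> n" using size_le_sum_mset[of P] P by (auto simp: parts_def)
    ultimately show "P \<in> (\<Union>s\<in>{..n}. multisets_of_size {1..n} s)"
      by (auto simp: multisets_of_size_def)
  qed
  moreover have "finite (\<Union>s\<in>{..n}. multisets_of_size {1..n} s)" by auto
  ultimately show ?thesis by (rule finite_subset)
qed

lemma count_mul_le: "s * count P s \<le> sum_mset (P::nat multiset)"
proof -
  let ?R = "replicate_mset (count P s) s"
  have sub: "?R \<subseteq># P"
    by (simp add: subseteq_mset_def count_replicate_mset)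
  have eq: "?R + (P - ?R) = P" by (rule subset_mset.add_diff_inverse[OF sub])
  have "sum_mset P = sum_mset (?R + (P - ?R))" by (simp only: eq)
  also have "\<dots> = sum_mset ?R + sum_mset (P - ?R)" by (rule sum_mset.union)
  also have "sum_mset ?R = count P s * s" by simp
  finally show ?thesis by simp
qed

lemma card_count_ge:
  assumes "0 < s" "Q s" "s * j \<le> n"
  shows "card {P \<in> parts Q n. j \<le> count P s} = card (parts Q (n - s * j))"
proof -
  let ?R = "replicate_mset j s"
  have "bij_betw (\<lambda>P. P - ?R) {P \<in> parts Q n. j \<le> count P s} (parts Q (n - s * j))"
  proof (rule bij_betw_byWitness[where f' = "\<lambda>P. P + ?R"])
    show "\<forall>a\<in>{P \<in> parts Q n. j \<le> count P s}. a - ?R + ?R = a"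
      by (simp add: subseteq_mset_def count_replicate_mset)
    show "\<forall>a'\<in>parts Q (n - s * j). a' + ?R - ?R = a'" by simp
    show "(\<lambda>P. P - ?R) ` {P \<in> parts Q n. j \<le> count P s} \<subseteq> parts Q (n - s * j)"
    proof
      fix x assume "x \<in> (\<lambda>P. P - ?R) ` {P \<in> parts Q n. j \<le> count P s}"
      then obtain P where P: "P \<in> parts Q n" "j \<le> count P s" and x: "x = P - ?R" by auto
      have sub: "?R \<subseteq># P" using P(2) by (simp add: subseteq_mset_def count_replicate_mset)
      then have "P = x + ?R" using x by simp
      then have "sum_mset P = sum_mset x + s * j" by (simp add: mult.commute[of j s])
      moreover have "\<forall>y\<in>#x. 0 < y \<and> Q y"
      proof
        fix y assume "y \<in># x"
        then have "y \<in># P" unfolding x by (rule in_diffD)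
        then show "0 < y \<and> Q y" using P(1) by (simp add: parts_def)
      qed
      moreover have "sum_mset P = n" using P(1) by (simp add: parts_def)
      ultimately show "x \<in> parts Q (n - s * j)" unfolding parts_def by simp
    qed
    show "(\<lambda>P. P + ?R) ` parts Q (n - s * j) \<subseteq> {P \<in> parts Q n. j \<le> count P s}"
    proof
      fix x assume "x \<in> (\<lambda>P. P + ?R) ` parts Q (n - s * j)"
      then obtain P where P: "P \<in> parts Q (n - s * j)" and x: "x = P + ?R" by blast
      have "sum_mset x = sum_mset P + s * j" unfolding x by (simp add: mult.commute[of j s])
      moreover have "sum_mset P = n - s * j" using P by (simp add: parts_def)
      ultimately have "sum_mset x = n" using assms(3) by simp
      moreover have "\<forall>y\<in>#x. 0 < y \<and> Q y"
      proof
        fix y assume "y \<in># x"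
        then have "y \<in># P \<or> y = s" unfolding x by (metis union_iff in_replicate_mset)
        then show "0 < y \<and> Q y" using P assms(1,2) unfolding parts_def by blast
      qed
      moreover have "j \<le> count x s" unfolding x by simp
      ultimately show "x \<in> {P \<in> parts Q n. j \<le> count P s}" by (simp add: parts_def)
    qed
  qed
  then show ?thesis by (rule bij_betw_same_card)
qed

lemma sum_parts_decomp:
  "n * card (parts Q n) = (\<Sum>s=1..n. \<Sum>j=1..n. s * card {P \<in> parts Q n. j \<le> count P s})"
proof -
  have step1: "sum_mset P = (\<Sum>s=1..n. s * count P s)" if P: "P \<in> parts Q n" for P
  proof -
    have "sum_mset P = (\<Sum>x\<in>set_mset P. x * count P x)" by (rule sum_mset_count)
    also have "\<dots> = (\<Sum>s=1..n. s * count P s)"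
    proof (rule sum.mono_neutral_left)
      show "set_mset P \<subseteq> {1..n}" using parts_elem_le[OF P] P
        by (auto simp: parts_def Suc_le_eq)
      show "\<forall>i\<in>{1..n} - set_mset P. i * count P i = 0" by (simp add: not_in_iff)
    qed simp
    finally show ?thesis .
  qed
  have step2: "s * count P s = (\<Sum>j=1..n. if j \<le> count P s then s else 0)"
    if P: "P \<in> parts Q n" and s: "s \<in> {1..n}" for P s
  proof -
    have "s * count P s \<le> n" using count_mul_le[of s P] P by (simp add: parts_def)
    then have c: "count P s \<le> n" using s
      by (metis dual_order.trans atLeastAtMost_iff mult_le_mono1 mult_1)
    have "(\<Sum>j=1..n. if j \<le> count P s then s else 0) = (\<Sum>j\<in>{j\<in>{1..n}. j \<le> count P s}. s)"
      by (rule sum.inter_filter[symmetric]) simp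
    also have "{j\<in>{1..n}. j \<le> count P s} = {1..count P s}" using c by auto
    finally show ?thesis by simp
  qed
  have "n * card (parts Q n) = (\<Sum>P\<in>parts Q n. sum_mset P)"
    by (simp add: parts_def)
  also have "\<dots> = (\<Sum>P\<in>parts Q n. \<Sum>s=1..n. \<Sum>j=1..n. if j \<le> count P s then s else 0)"
  proof (intro sum.cong refl)
    fix P assume P: "P \<in> parts Q n"
    show "sum_mset P = (\<Sum>s=1..n. \<Sum>j=1..n. if j \<le> count P s then s else 0)"
      unfolding step1[OF P] by (intro sum.cong refl step2[OF P])
  qed
  also have "\<dots> = (\<Sum>s=1..n. \<Sum>P\<in>parts Q n. \<Sum>j=1..n. if j \<le> count P s then s else 0)"
    by (rule sum.swap)
  also have "\<dots> = (\<Sum>s=1..n. \<Sum>j=1..n. \<Sum>P\<in>parts Q n. if j \<le> count P s then s else 0)"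
    by (intro sum.cong refl sum.swap)
  also have "\<dots> = (\<Sum>s=1..n. \<Sum>j=1..n. s * card {P \<in> parts Q n. j \<le> count P s})"
  proof (intro sum.cong refl)
    fix s j
    have "(\<Sum>P\<in>parts Q n. if j \<le> count P s then s else 0) = (\<Sum>P\<in>{P \<in> parts Q n. j \<le> count P s}. s)"
      by (rule sum.inter_filter[symmetric]) (rule finite_parts)
    then show "(\<Sum>P\<in>parts Q n. if j \<le> count P s then s else 0) = s * card {P \<in> parts Q n. j \<le> count P s}"
      by simp
  qed
  finally show ?thesis .
qed

lemma card_count_ge':
  assumes "s \<in> {1..n}" "j \<in> {1..n}"
  shows "card {P \<in> parts Q n. j \<le> count P s} =
    (if Q s \<and> s * j \<le> n then card (parts Q (n - s * j)) else 0)"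
proof (cases "Q s \<and> s * j \<le> n")
  case True
  then show ?thesis using card_count_ge[of s Q j n] assms by simp
next
  case False
  have e: "{P \<in> parts Q n. j \<le> count P s} = {}"
  proof (rule ccontr)
    assume "{P \<in> parts Q n. j \<le> count P s} \<noteq> {}"
    then obtain P where P: "P \<in> parts Q n" "j \<le> count P s" by blast
    moreover have "1 \<le> j" using assms(2) by simp
    ultimately have "0 < count P s" by linarith
    then have "s \<in># P" by simp
    then have "Q s" using P by (simp add: parts_def)
    moreover have le1: "s * j \<le> s * count P s" using P(2) by simp
    have le2: "s * count P s \<le> n" using count_mul_le[of s P] P(1) by (simp add: parts_def)
    from le1 le2 have "s * j \<le> n" by linarith
    ultimately show False using False by simp
  qed
  show ?thesis by (simp only: e card.empty if_not_P[OF False])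
qed

lemma reindex_sig:
  "(\<Sum>s=1..n. \<Sum>j=1..n. if Q s \<and> s * j \<le> n then s * f (n - s * j) else 0) =
   (\<Sum>k=1..n. sig Q k * f (n - k))"
proof -
  define A where "A = {sj \<in> {1..n} \<times> {1..n}. Q (fst sj) \<and> fst sj * snd sj \<le> n}"
  define D where "D = (\<lambda>k. {d. d dvd k \<and> 0 < d \<and> Q d})"
  have finD: "finite (D k)" if "k \<in> {1..n}" for k
    using that by (auto simp: D_def intro: finite_subset[of _ "{..k}"] dest: dvd_imp_le)
  have "(\<Sum>s=1..n. \<Sum>j=1..n. if Q s \<and> s * j \<le> n then s * f (n - s * j) else 0) =
        (\<Sum>sj\<in>{1..n} \<times> {1..n}. if Q (fst sj) \<and> fst sj * snd sj \<le> n then fst sj * f (n - fst sj * snd sj) else 0)"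
    by (simp add: sum.cartesian_product case_prod_unfold)
  also have "\<dots> = (\<Sum>sj\<in>A. fst sj * f (n - fst sj * snd sj))"
    unfolding A_def by (rule sum.inter_filter[symmetric]) simp
  also have "\<dots> = (\<Sum>(k,d)\<in>Sigma {1..n} D. d * f (n - k))"
  proof -
    have 2: "(d, k div d) \<in> A \<and> d * (k div d) = k" if b: "(k, d) \<in> Sigma {1..n} D" for k d
    proof -
      have k: "1 \<le> k" "k \<le> n" and d: "d dvd k" "0 < d" "Q d" using b by (auto simp: D_def)
      have "d \<le> k" using d k by (simp add: dvd_imp_le)
      moreover have "k div d \<le> n" using k(2) div_le_dividend[of k d] by linarith
      moreover have "1 \<le> k div d" using d k
        by (metis One_nat_def dvd_div_eq_0_iff less_one not_less div_by_0 nat_less_le)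
      moreover have "d * (k div d) = k" using d by simp
      ultimately show ?thesis using k d by (auto simp: A_def)
    qed
    show ?thesis
      apply (rule sum.reindex_bij_witness[where i = "\<lambda>(k,d). (d, k div d)" and j = "\<lambda>(s,j). (s * j, s)"])
      subgoal for a by (cases a) (auto simp: A_def)
      subgoal for a by (cases a) (auto simp: A_def D_def)
      subgoal for b by (cases b) (use 2 in auto)
      subgoal for b by (cases b) (use 2 in auto)
      subgoal for a by (cases a) (auto simp: A_def)
      done
  qed
  also have "\<dots> = (\<Sum>k=1..n. \<Sum>d\<in>D k. d * f (n - k))"
    by (rule sum.Sigma[symmetric]) (auto simp: finD)
  also have "\<dots> = (\<Sum>k=1..n. sig Q k * f (n - k))"
    by (simp add: sig_def D_def sum_distrib_right)
  finally show ?thesis .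
qed

lemma part1_main:
  "n * card (parts Q n) = (\<Sum>k=1..n. sig Q k * card (parts Q (n - k)))"
proof -
  have "n * card (parts Q n) = (\<Sum>s=1..n. \<Sum>j=1..n. s * card {P \<in> parts Q n. j \<le> count P s})"
    by (rule sum_parts_decomp)
  also have "\<dots> = (\<Sum>s=1..n. \<Sum>j=1..n. if Q s \<and> s * j \<le> n then s * card (parts Q (n - s * j)) else 0)"
    by (intro sum.cong refl) (simp only: card_count_ge', simp)
  also have "\<dots> = (\<Sum>k=1..n. sig Q k * card (parts Q (n - k)))"
    by (rule reindex_sig)
  finally show ?thesis .
qed






definition TS :: "nat \<Rightarrow> nat \<Rightarrow> nat \<Rightarrow> (nat \<Rightarrow> nat) set" where
  "TS N n k = {f. (\<forall>i. i \<notin> {1..N} \<longrightarrow> f i = 0) \<and> (\<Sum>i=1..N. f i) = k \<and> (\<Sum>i=1..N. i * f i) = n}"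

definition TT :: "(nat \<Rightarrow> real) \<Rightarrow> nat \<Rightarrow> nat \<Rightarrow> nat \<Rightarrow> real" where
  "TT a N n k = (\<Sum>f\<in>TS N n k. \<Prod>i=1..N. a i ^ f i / fact (f i))"

definition GN :: "(nat \<Rightarrow> real) \<Rightarrow> nat \<Rightarrow> real fps" where
  "GN a N = Abs_fps (\<lambda>i. if 1 \<le> i \<and> i \<le> N then a i else 0)"

lemma TS0: "TS 0 n k = (if n = 0 \<and> k = 0 then {\<lambda>_. 0} else {})"
  by (auto simp: TS_def)

lemma TS_Suc: "TS (Suc N) n k = (\<lambda>(j,g). g(Suc N := j)) ` (SIGMA j:{j. j \<le> k \<and> Suc N * j \<le> n}. TS N (n - Suc N * j) (k - j))"
proof (intro equalityI subsetI)
  fix f assume f: "f \<in> TS (Suc N) n k"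
  define j where "j = f (Suc N)"
  define g where "g = f(Suc N := 0)"
  have s1: "(\<Sum>i=1..N. g i) = (\<Sum>i=1..N. f i)" by (intro sum.cong) (auto simp: g_def)
  have s2: "(\<Sum>i=1..N. i * g i) = (\<Sum>i=1..N. i * f i)" by (intro sum.cong) (auto simp: g_def)
  have k: "(\<Sum>i=1..N. f i) + j = k" using f by (simp add: TS_def j_def)
  have n: "(\<Sum>i=1..N. i * f i) + Suc N * j = n" using f by (simp add: TS_def j_def)
  have "g \<in> TS N (n - Suc N * j) (k - j)"
    using f s1 s2 k n by (auto simp: TS_def g_def)
  moreover have "f = g(Suc N := j)" by (auto simp: g_def j_def)
  ultimately show "f \<in> (\<lambda>(j,g). g(Suc N := j)) ` (SIGMA j:{j. j \<le> k \<and> Suc N * j \<le> n}. TS N (n - Suc N * j) (k - j))"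
    using k n by force
next
  fix f assume "f \<in> (\<lambda>(j,g). g(Suc N := j)) ` (SIGMA j:{j. j \<le> k \<and> Suc N * j \<le> n}. TS N (n - Suc N * j) (k - j))"
  then obtain j g where j: "j \<le> k" "Suc N * j \<le> n" and g: "g \<in> TS N (n - Suc N * j) (k - j)"
    and f: "f = g(Suc N := j)" by auto
  have s1: "(\<Sum>i=1..N. f i) = (\<Sum>i=1..N. g i)" by (intro sum.cong) (auto simp: f)
  have s2: "(\<Sum>i=1..N. i * f i) = (\<Sum>i=1..N. i * g i)" by (intro sum.cong) (auto simp: f)
  show "f \<in> TS (Suc N) n k"
    using g j s1 s2 unfolding TS_def by (auto simp: f)
qed

lemma TS_inj: "inj_on (\<lambda>(j,g). g(Suc N := j)) (SIGMA j:{j. j \<le> k \<and> Suc N * j \<le> n}. TS N (n - Suc N * j) (k - j))"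
proof (rule inj_onI, clarify)
  fix j g j' g'
  assume g: "g \<in> TS N (n - Suc N * j) (k - j)" and g': "g' \<in> TS N (n - Suc N * j') (k - j')"
    and eq: "g(Suc N := j) = g'(Suc N := j')"
  have "j = j'" using fun_cong[OF eq, of "Suc N"] by simp
  moreover have "g = g'"
  proof
    fix i show "g i = g' i"
      using fun_cong[OF eq, of i] g g' by (cases "i = Suc N") (auto simp: TS_def)
  qed
  ultimately show "j = j' \<and> g = g'" by simp
qed

lemma finite_TS: "finite (TS N n k)"
proof (induction N arbitrary: n k)
  case 0 then show ?case by (simp add: TS0)
next
  case (Suc N)
  have "finite {j. j \<le> k \<and> Suc N * j \<le> n}" by simp
  then show ?case unfolding TS_Suc using Suc by (intro finite_imageI finite_SigmaI) auto
qed

lemma TT_Suc: "TT a (Suc N) n k =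
  (\<Sum>j\<in>{j. j \<le> k \<and> Suc N * j \<le> n}. a (Suc N) ^ j / fact j * TT a N (n - Suc N * j) (k - j))"
proof -
  have "TT a (Suc N) n k = (\<Sum>(j,g)\<in>(SIGMA j:{j. j \<le> k \<and> Suc N * j \<le> n}. TS N (n - Suc N * j) (k - j)).
      \<Prod>i=1..Suc N. a i ^ (g(Suc N := j)) i / fact ((g(Suc N := j)) i))"
    unfolding TT_def TS_Suc by (subst sum.reindex[OF TS_inj]) (simp add: case_prod_unfold)
  also have "\<dots> = (\<Sum>j\<in>{j. j \<le> k \<and> Suc N * j \<le> n}. \<Sum>g\<in>TS N (n - Suc N * j) (k - j).
      \<Prod>i=1..Suc N. a i ^ (g(Suc N := j)) i / fact ((g(Suc N := j)) i))"
    by (rule sum.Sigma[symmetric]) (auto simp: finite_TS)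
  also have "\<dots> = (\<Sum>j\<in>{j. j \<le> k \<and> Suc N * j \<le> n}. a (Suc N) ^ j / fact j * TT a N (n - Suc N * j) (k - j))"
  proof (intro sum.cong refl)
    fix j
    show "(\<Sum>g\<in>TS N (n - Suc N * j) (k - j). \<Prod>i=1..Suc N. a i ^ (g(Suc N := j)) i / fact ((g(Suc N := j)) i))
        = a (Suc N) ^ j / fact j * TT a N (n - Suc N * j) (k - j)"
      unfolding TT_def sum_distrib_left
    proof (intro sum.cong refl)
      fix g
      have "(\<Prod>i=1..Suc N. a i ^ (g(Suc N := j)) i / fact ((g(Suc N := j)) i))
          = (\<Prod>i=1..N. a i ^ (g(Suc N := j)) i / fact ((g(Suc N := j)) i)) * (a (Suc N) ^ j / fact j)"
        by (simp add: prod.cl_ivl_Suc)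
      also have "(\<Prod>i=1..N. a i ^ (g(Suc N := j)) i / fact ((g(Suc N := j)) i)) = (\<Prod>i=1..N. a i ^ g i / fact (g i))"
        by (intro prod.cong) auto
      finally show "(\<Prod>i=1..Suc N. a i ^ (g(Suc N := j)) i / fact ((g(Suc N := j)) i)) =
         a (Suc N) ^ j / fact j * (\<Prod>i=1..N. a i ^ g i / fact (g i))" by simp
    qed
  qed
  finally show ?thesis .
qed

lemma GN_Suc: "GN a (Suc N) = GN a N + fps_const (a (Suc N)) * fps_X ^ Suc N"
  by (rule fps_ext) (auto simp: GN_def fps_X_power_iff)

lemma coeff_cXF: "(fps_const c * fps_X ^ M * F) $ n = (if n < M then 0 else c * F $ (n - M))"
  by (simp add: mult.assoc fps_X_power_mult_nth)

lemma TT_GN: "TT a N n k * fact k = (GN a N ^ k) $ n"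
proof (induction N arbitrary: n k)
  case 0
  have "GN a 0 = 0" by (rule fps_ext) (simp add: GN_def)
  then show ?case by (cases k) (auto simp: TT_def TS0)
next
  case (Suc N)
  let ?c = "a (Suc N)"
  have "GN a (Suc N) ^ k = (\<Sum>j\<le>k. of_nat (k choose j) * (fps_const ?c * fps_X ^ Suc N) ^ j * GN a N ^ (k - j))"
    unfolding GN_Suc by (subst add.commute) (rule binomial_ring)
  also have "\<dots> = (\<Sum>j\<le>k. fps_const (of_nat (k choose j) * ?c ^ j) * fps_X ^ (Suc N * j) * GN a N ^ (k - j))"
  proof (intro sum.cong refl)
    fix j
    have e: "(fps_const ?c * fps_X ^ Suc N) ^ j = fps_const (?c ^ j) * fps_X ^ (Suc N * j)"
      by (simp only: power_mult_distrib fps_const_power power_mult)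
    show "of_nat (k choose j) * (fps_const ?c * fps_X ^ Suc N) ^ j * GN a N ^ (k - j) =
       fps_const (of_nat (k choose j) * ?c ^ j) * fps_X ^ (Suc N * j) * GN a N ^ (k - j)"
      unfolding e by (simp only: fps_of_nat[symmetric] fps_const_mult[symmetric] mult.assoc)
  qed
  finally have "(GN a (Suc N) ^ k) $ n = (\<Sum>j\<le>k. if n < Suc N * j then 0 else of_nat (k choose j) * ?c ^ j * (GN a N ^ (k - j)) $ (n - Suc N * j))"
    by (simp only: fps_sum_nth coeff_cXF)
  also have "\<dots> = (\<Sum>j\<le>k. if n < Suc N * j then 0 else fact k * (?c ^ j / fact j * TT a N (n - Suc N * j) (k - j)))"
  proof (intro sum.cong refl)
    fix j assume j: "j \<in> {..k}"
    have "real (k choose j) * fact (k - j) = fact k / fact j"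
      using j by (simp add: binomial_fact field_simps)
    then show "(if n < Suc N * j then 0 else of_nat (k choose j) * ?c ^ j * (GN a N ^ (k - j)) $ (n - Suc N * j))
       = (if n < Suc N * j then 0 else fact k * (?c ^ j / fact j * TT a N (n - Suc N * j) (k - j)))"
      by (simp add: Suc.IH[symmetric] field_simps)
  qed
  also have "\<dots> = fact k * (\<Sum>j\<in>{j. j \<le> k \<and> Suc N * j \<le> n}. ?c ^ j / fact j * TT a N (n - Suc N * j) (k - j))"
  proof -
    have eq: "{j. j \<le> k \<and> Suc N * j \<le> n} = {j\<in>{..k}. Suc N * j \<le> n}" by auto
    show ?thesis unfolding eq sum_distrib_left sum.inter_filter[OF finite_atMost]
      by (intro sum.cong refl) (simp add: not_less)
  qed
  finally show ?case by (simp add: TT_Suc)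
qed


definition GG :: "(nat \<Rightarrow> real) \<Rightarrow> real fps" where
  "GG a = Abs_fps (\<lambda>i. if i = 0 then 0 else a i)"

lemma GG_X: "GG a = fps_X * Abs_fps (\<lambda>i. a (i + 1))"
  by (rule fps_ext) (simp add: GG_def)

lemma GN_X: "GN a N = fps_X * Abs_fps (\<lambda>i. if i + 1 \<le> N then a (i + 1) else 0)"
  by (rule fps_ext) (auto simp: GN_def)

lemma GG_GN: "GG a - GN a N = fps_X ^ (N + 1) * Abs_fps (\<lambda>i. a (i + N + 1))"
  by (rule fps_ext) (simp only: fps_X_power_mult_nth fps_sub_nth, auto simp: GG_def GN_def)

lemma GG_pow_coeff_zero: "n < k \<Longrightarrow> (GG a ^ k) $ n = 0"
  unfolding GG_X power_mult_distrib by (simp add: fps_X_power_mult_nth)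

lemma GN_trunc:
  assumes "1 \<le> k"
  shows "(GN a (n - k + 1) ^ k) $ n = (GG a ^ k) $ n"
proof -
  define N where "N = n - k + 1"
  define A1 where "A1 = Abs_fps (\<lambda>i. a (i + 1))"
  define B1 where "B1 = Abs_fps (\<lambda>i. if i + 1 \<le> N then a (i + 1) else 0)"
  define H where "H = Abs_fps (\<lambda>i. a (i + N + 1))"
  have A: "GG a = fps_X * A1" unfolding A1_def by (rule GG_X)
  have B: "GN a N = fps_X * B1" unfolding B1_def by (rule GN_X)
  have AB: "GG a - GN a N = fps_X ^ (N + 1) * H" unfolding H_def by (rule GG_GN)
  have S: "(\<Sum>i<k. GN a N ^ (k - Suc i) * GG a ^ i) = fps_X ^ (k - 1) * (\<Sum>i<k. B1 ^ (k - Suc i) * A1 ^ i)"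
    unfolding sum_distrib_left
  proof (intro sum.cong refl)
    fix i assume "i \<in> {..<k}"
    then have e: "k - 1 = (k - Suc i) + i" by auto
    show "GN a N ^ (k - Suc i) * GG a ^ i = fps_X ^ (k - 1) * (B1 ^ (k - Suc i) * A1 ^ i)"
      unfolding A B e power_add power_mult_distrib by (simp add: ac_simps)
  qed
  have "GG a ^ k - GN a N ^ k = fps_X ^ (N + 1) * H * (fps_X ^ (k - 1) * (\<Sum>i<k. B1 ^ (k - Suc i) * A1 ^ i))"
    unfolding power_diff_sumr2 AB S ..
  also have "\<dots> = fps_X ^ (N + 1 + (k - 1)) * (H * (\<Sum>i<k. B1 ^ (k - Suc i) * A1 ^ i))"
    by (simp add: power_add ac_simps)
  finally have "(GG a ^ k - GN a N ^ k) $ n = (fps_X ^ (N + 1 + (k - 1)) * (H * (\<Sum>i<k. B1 ^ (k - Suc i) * A1 ^ i))) $ n"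
    by (simp only:)
  also have "\<dots> = 0" unfolding fps_X_power_mult_nth using assms by (simp add: N_def)
  finally have "(GG a ^ k - GN a N ^ k) $ n = 0" .
  then show ?thesis unfolding N_def by simp
qed

lemma bell_eq:
  assumes "1 \<le> k"
  shows "partial_bell n k (\<lambda>i. fact i * a i) = fact n / fact k * (GG a ^ k) $ n"
proof -
  have "partial_bell n k (\<lambda>i. fact i * a i) = fact n * TT a (n - k + 1) n k"
    unfolding partial_bell_def TT_def bell_tuples_def TS_def sum_distrib_left
  proof (intro sum.cong refl)
    fix j :: "nat \<Rightarrow> nat"
    have "(\<Prod>i=1..n-k+1. (fact i * a i / fact i) ^ j i) = (\<Prod>i=1..n-k+1. a i ^ j i)"
      by (intro prod.cong refl) simp
    moreover have "(\<Prod>i=1..n-k+1. a i ^ j i / fact (j i)) = (\<Prod>i=1..n-k+1. a i ^ j i) / (\<Prod>i=1..n-k+1. fact (j i))"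
      by (rule prod_dividef)
    ultimately show "fact n / (\<Prod>i=1..n-k+1. fact (j i)) * (\<Prod>i=1..n-k+1. (fact i * a i / fact i) ^ j i) =
        fact n * (\<Prod>i=1..n-k+1. a i ^ j i / fact (j i))" by simp
  qed
  also have "TT a (n - k + 1) n k = (GG a ^ k) $ n / fact k"
    using TT_GN[of a "n - k + 1" n k] GN_trunc[OF assms, of a n] by (simp add: field_simps)
  finally show ?thesis by simp
qed

definition ell :: "(nat \<Rightarrow> real) \<Rightarrow> nat \<Rightarrow> real" where
  "ell a n = (\<Sum>k=1..n. (-1) ^ (k - 1) / of_nat k * (GG a ^ k) $ n)"

lemma rhs_eq_ell:
  assumes "1 \<le> n"
  shows "1 / fact (n - 1) * (\<Sum>k=1..n. (-1) ^ (k - 1) * fact (k - 1) * partial_bell n k (\<lambda>i. fact i * a i))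
    = of_nat n * ell a n"
  unfolding ell_def sum_distrib_left
proof (intro sum.cong refl)
  fix k assume k: "k \<in> {1..n}"
  have fk: "fact k = (of_nat k :: real) * fact (k - 1)" using k by (simp add: fact_reduce)
  have fn: "fact n = (of_nat n :: real) * fact (n - 1)" using assms by (simp add: fact_reduce)
  have "k \<noteq> 0" using k by simp
  then show "1 / fact (n - 1) * ((-1) ^ (k - 1) * fact (k - 1) * partial_bell n k (\<lambda>i. fact i * a i)) =
      of_nat n * ((-1) ^ (k - 1) / of_nat k * (GG a ^ k) $ n)"
  proof -
    have "1 / fact (n - 1) * ((-1) ^ (k - 1) * fact (k - 1) * partial_bell n k (\<lambda>i. fact i * a i)) =
      1 / fact (n - 1) * ((-1) ^ (k - 1) * fact (k - 1) * (of_nat n * fact (n - 1) / (of_nat k * fact (k - 1)) * (GG a ^ k) $ n))"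
      using k by (simp add: bell_eq fk fn)
    also have "\<dots> = of_nat n * ((-1) ^ (k - 1) / of_nat k * (GG a ^ k) $ n)"
      using \<open>k \<noteq> 0\<close> by (simp add: divide_simps)
    finally show ?thesis .
  qed
qed

lemma tele:
  "(1 + F) * (\<Sum>k=1..N. fps_const ((-1) ^ (k - 1)) * F ^ (k - 1)) = 1 - fps_const ((-1) ^ N) * (F :: real fps) ^ N"
proof (induction N)
  case 0 then show ?case by simp
next
  case (Suc N)
  have "(1 + F) * (\<Sum>k=1..Suc N. fps_const ((-1) ^ (k - 1)) * F ^ (k - 1)) =
     (1 + F) * (\<Sum>k=1..N. fps_const ((-1) ^ (k - 1)) * F ^ (k - 1)) + (1 + F) * (fps_const ((-1) ^ N) * F ^ N)"
    by (simp add: distrib_left)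
  also have "\<dots> = 1 - fps_const ((-1) ^ Suc N) * F ^ Suc N"
  proof -
    define c where "c = fps_const ((-1) ^ N :: real)"
    have c': "fps_const ((-1) ^ Suc N :: real) = - c" by (simp add: c_def)
    have "(1 - c * F ^ N) + (1 + F) * (c * F ^ N) = 1 - (- c) * F ^ Suc N"
      by (simp add: algebra_simps)
    then show ?thesis unfolding Suc.IH c' c_def[symmetric] .
  qed
  finally show ?case .
qed





lemma ell_ext:
  assumes "m \<le> N"
  shows "ell a m = (\<Sum>k=1..N. (-1) ^ (k - 1) / of_nat k * (GG a ^ k) $ m)"
  unfolding ell_def
  by (rule sum.mono_neutral_left) (use assms in \<open>auto simp: GG_pow_coeff_zero\<close>)

lemma ell_rec:
  assumes a0: "a 0 = 1"
  shows "of_nat (Suc m) * a (Suc m) = (\<Sum>i=1..Suc m. (of_nat i * ell a i) * a (Suc m - i))"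
proof -
  define n where "n = Suc m"
  define G where "G = GG a"
  define L where "L = (\<Sum>k=1..n. fps_const ((-1) ^ (k - 1) / of_nat k) * G ^ k)"
  have dL: "fps_deriv L = (\<Sum>k=1..n. fps_const ((-1) ^ (k - 1)) * G ^ (k - 1)) * fps_deriv G"
    unfolding L_def fps_deriv_sum sum_distrib_right
  proof (intro sum.cong refl)
    fix k assume k: "k \<in> {1..n}"
    have "fps_const ((-1) ^ (k - 1) / of_nat k) * fps_const (of_nat k) = fps_const ((-1) ^ (k - 1) :: real)"
      using k by simp
    then show "fps_deriv (fps_const ((-1) ^ (k - 1) / of_nat k) * G ^ k) =
        fps_const ((-1) ^ (k - 1)) * G ^ (k - 1) * fps_deriv G"
      unfolding fps_deriv_mult_const_left fps_deriv_power
      by (metis (no_types, lifting) mult.assoc mult.commute)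
  qed
  have main: "(1 + G) * fps_deriv L = (1 - fps_const ((-1) ^ n) * G ^ n) * fps_deriv G"
    unfolding dL mult.assoc[symmetric] tele ..
  have lhs: "((1 + G) * fps_deriv L) $ m = (\<Sum>i=1..n. (of_nat i * ell a i) * a (n - i))"
  proof -
    have "((1 + G) * fps_deriv L) $ m = (fps_deriv L * (1 + G)) $ m" by (simp add: mult.commute)
    also have "\<dots> = (\<Sum>i=0..m. (fps_deriv L) $ i * (1 + G) $ (m - i))" by (rule fps_mult_nth)
    also have "\<dots> = (\<Sum>i=0..m. (of_nat (Suc i) * ell a (Suc i)) * a (n - Suc i))"
    proof (intro sum.cong refl)
      fix i assume i: "i \<in> {0..m}"
      have "(1 + G) $ (m - i) = a (m - i)" by (simp add: G_def GG_def a0)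
      moreover have "L $ Suc i = ell a (Suc i)"
        unfolding L_def fps_sum_nth using i
        by (subst ell_ext[of "Suc i" n]) (auto simp: n_def G_def)
      ultimately show "(fps_deriv L) $ i * (1 + G) $ (m - i) = (of_nat (Suc i) * ell a (Suc i)) * a (n - Suc i)"
        by (simp add: n_def)
    qed
    also have "\<dots> = (\<Sum>i=1..n. (of_nat i * ell a i) * a (n - i))"
      using sum.shift_bounds_cl_Suc_ivl[of "\<lambda>i. (of_nat i * ell a i) * a (n - i)" 0 m]
      by (simp only: n_def One_nat_def)
    finally show ?thesis .
  qed
  have rhs: "((1 - fps_const ((-1) ^ n) * G ^ n) * fps_deriv G) $ m = of_nat n * a n"
  proof -
    have z: "(G ^ n * fps_deriv G) $ m = 0"
      unfolding G_def GG_X power_mult_distrib mult.assoc fps_X_power_mult_nth by (simp add: n_def)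
    have "((1 - fps_const ((-1) ^ n) * G ^ n) * fps_deriv G) $ m =
        (fps_deriv G) $ m - (-1) ^ n * (G ^ n * fps_deriv G) $ m"
    proof -
      have "(1 - fps_const ((-1) ^ n) * G ^ n) * fps_deriv G = fps_deriv G - fps_const ((-1) ^ n) * (G ^ n * fps_deriv G)"
        by (simp add: algebra_simps)
      then show ?thesis by (simp only: fps_sub_nth fps_mult_left_const_nth)
    qed
    also have "\<dots> = of_nat n * a n" using z by (simp add: G_def GG_def n_def)
    finally show ?thesis .
  qed
  show ?thesis using main lhs rhs by (simp add: n_def)
qed

lemma rec_unique:
  fixes x y a :: "nat \<Rightarrow> real"
  assumes a0: "a 0 = 1"
    and hx: "\<And>n. 1 \<le> n \<Longrightarrow> of_nat n * a n = (\<Sum>i=1..n. x i * a (n - i))"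
    and hy: "\<And>n. 1 \<le> n \<Longrightarrow> of_nat n * a n = (\<Sum>i=1..n. y i * a (n - i))"
  shows "1 \<le> n \<Longrightarrow> x n = y n"
proof (induction n rule: less_induct)
  case (less n)
  then obtain m where m: "n = Suc m" by (cases n) auto
  have sx: "(\<Sum>i=1..n. x i * a (n - i)) = (\<Sum>i=1..m. x i * a (n - i)) + x n"
    using a0 by (simp add: m)
  have sy: "(\<Sum>i=1..n. y i * a (n - i)) = (\<Sum>i=1..m. y i * a (n - i)) + y n"
    using a0 by (simp add: m)
  have "(\<Sum>i=1..m. x i * a (n - i)) = (\<Sum>i=1..m. y i * a (n - i))"
    by (intro sum.cong refl) (simp add: less.IH m)
  then show ?case using hx[OF less.prems] hy[OF less.prems] sx sy by simp
qed


theorem corollary3p2: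
  fixes n m :: nat
  assumes "n \<ge> 1" and "m \<ge> 3"
  shows "real (sigma' m n) =
    1 / fact (n - 1) *
    (\<Sum>k=1..n. (-1) ^ (k - 1) * fact (k - 1) *
        partial_bell n k (\<lambda>i. fact i * real (p' m i)))"
proof -
  define Q where "Q = (\<lambda>d::nat. d mod m = 0 \<or> d mod m = 1 \<or> d mod m = m - 1)"
  define a where "a = (\<lambda>i. real (p' m i))"
  have pp: "p' m i = card (parts Q i)" for i
  proof -
    have "{P \<in> nat_partitions i. \<forall>x\<in>#P. x mod m = 0 \<or> x mod m = 1 \<or> x mod m = m - 1} = parts Q i"
      by (auto simp: nat_partitions_def parts_def Q_def)
    then show ?thesis by (simp add: p'_def)
  qed
  have "parts Q 0 = {{#}}"
  proof (intro equalityI subsetI)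
    fix P assume P: "P \<in> parts Q 0"
    have "P = {#}"
    proof (rule ccontr)
      assume "P \<noteq> {#}"
      then obtain x where x: "x \<in># P" by (meson multiset_nonemptyE)
      have "x \<le> 0" by (rule parts_elem_le[OF P x])
      moreover have "0 < x" using P x by (simp add: parts_def)
      ultimately show False by simp
    qed
    then show "P \<in> {{#}}" by simp
  qed (simp add: parts_def)
  then have a0: "a 0 = 1" by (simp add: a_def pp)
  have sg: "sigma' m k = sig Q k" for k by (simp add: sigma'_def sig_def Q_def)
  have hx: "of_nat k * a k = (\<Sum>i=1..k. real (sig Q i) * a (k - i))" if "1 \<le> k" for k
  proof -
    have "real (k * card (parts Q k)) = real (\<Sum>i=1..k. sig Q i * card (parts Q (k - i)))"
      by (simp only: part1_main)
    then show ?thesis by (simp add: a_def pp)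
  qed
  have hy: "of_nat k * a k = (\<Sum>i=1..k. (of_nat i * ell a i) * a (k - i))" if k1: "1 \<le> k" for k
  proof -
    obtain j where "k = Suc j" using k1 by (cases k) auto
    then show ?thesis using ell_rec[of a j, OF a0] by simp
  qed
  have "real (sig Q n) = of_nat n * ell a n"
    using rec_unique[of a "\<lambda>i. real (sig Q i)" "\<lambda>i. of_nat i * ell a i", OF a0 hx hy assms(1)] .
  also have "\<dots> = 1 / fact (n - 1) * (\<Sum>k=1..n. (-1) ^ (k - 1) * fact (k - 1) * partial_bell n k (\<lambda>i. fact i * a i))"
    by (rule rhs_eq_ell[OF assms(1), symmetric])
  finally show ?thesis by (simp add: sg a_def)
qed

end
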